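(* Let $a,b,c\in\mathbb{R}$ with $c\neq0$. Let $\theta_\pm$ be the roots of the quadratic $-3c\theta^2+\sqrt3(a-b)\theta+(a+b+c)$, and let $\theta_1,\theta_2,\theta_3$ be the roots of the cubic $-3c\theta^3+\sqrt3(a-b)\theta^2+(4a+4b+c)\theta+\sqrt3(a-b)$, assumed pairwise distinct. For $(u,v,w)$ with $u,v,w$ pairwise distinct put $\theta(u,v,w)=\frac{u+v-2w}{\sqrt3(u-v)}$, and let $\Omega\subset\mathbb{R}^3$ be a connected open set on which $u,v,w$ are pairwise distinct and $\theta\neq\theta_1,\theta_2,\theta_3$, with continuous branches of the logarithms below chosen on $\Omega$. Define $$\begin{aligned}h(u,v,w)={}&(\theta_1-\theta_2)(\theta_2-\theta_3)(\theta_3-\theta_1)\ln\frac{u-v}{\sqrt2}\\&-(\theta_1-\theta_+)(\theta_2-\theta_3)(\theta_1-\theta_-)\ln(\theta-\theta_1)\\&-(\theta_2-\theta_+)(\theta_2-\theta_-)(\theta_3-\theta_1)\ln(\theta-\theta_2)\\&-(\theta_1-\theta_2)(\theta_3-\theta_+)(\theta_3-\theta_-)\ln(\theta-\theta_3).\end{aligned}$$ Then $h$ is constant along every solution curve contained in $\Omega$ of $$u'=\frac{c}{u-v}+\frac{b}{u-w},\quad v'=\frac{a}{v-w}+\frac{c}{v-u},\quad w'=\frac{b}{w-u}+\frac{a}{w-v}.$$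
   Context: The roots $\theta_\pm,\theta_i$ may be complex, in which case $h$ is complex-valued and the logarithms are continuous complex branches on $\Omega$. *)

theory Defs
  imports "HOL-Analysis.Analysis"
begin

definition theta :: "real \<Rightarrow> real \<Rightarrow> real \<Rightarrow> real" where
  "theta u v w = (u + v - 2 * w) / (sqrt 3 * (u - v))"

text \<open>The function h, expressed through chosen (continuous) logarithm branches
  L0 of (u-v)/sqrt 2 and Lk of theta - theta_k (k = 1,2,3).\<close>
definition hfun ::
  "complex \<Rightarrow> complex \<Rightarrow> complex \<Rightarrow> complex \<Rightarrow> complex \<Rightarrow>
   complex \<Rightarrow> complex \<Rightarrow> complex \<Rightarrow> complex \<Rightarrow> complex" where
  "hfun th1 th2 th3 thpl thmn L0 L1 L2 L3 =
     (th1 - th2) * (th2 - th3) * (th3 - th1) * L0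
     - (th1 - thpl) * (th2 - th3) * (th1 - thmn) * L1
     - (th2 - thpl) * (th2 - thmn) * (th3 - th1) * L2
     - (th1 - th2) * (th3 - thpl) * (th3 - thmn) * L3"

end

theory Submission
  imports Defs
begin

lemma log_deriv:
  fixes f g :: "real \<Rightarrow> complex"
  assumes cont: "continuous (at t within S) f" and ex: "\<And>s. s\<in>S \<Longrightarrow> exp (f s) = g s"
    and tS: "t\<in>S" and dg: "(g has_vector_derivative g') (at t within S)" and gnz: "g t \<noteq> 0"
  shows "(f has_vector_derivative (g' / g t)) (at t within S)"
proof -
  obtain d where d: "d>0" "\<And>s. s\<in>S \<Longrightarrow> dist s t < d \<Longrightarrow> dist (f s) (f t) < pi"
    using cont[unfolded continuous_within_eps_delta] pi_gt_zero by metis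
  define k where "k = (\<lambda>s. inverse (g t) * g s)"
  have dk: "(k has_vector_derivative inverse (g t) * g') (at t within S)"
    unfolding k_def using dg by (rule has_vector_derivative_mult_right)
  have kt: "k t = 1" using gnz by (simp add: k_def)
  have "1 \<notin> (\<real>\<^sub>\<le>\<^sub>0 :: complex set)" by (simp add: nonpos_Reals_def)
  then have dLn: "(Ln has_field_derivative 1) (at (k t) within k ` S)"
    using has_field_derivative_Ln[of 1] kt by (simp add: has_field_derivative_at_within)
  have "((Ln \<circ> k) has_vector_derivative (inverse (g t) * g' * 1)) (at t within S)"
    by (rule field_vector_diff_chain_within[OF dk dLn])
  then have "((\<lambda>s. f t + (Ln \<circ> k) s) has_vector_derivative (0 + inverse (g t) * g' * 1)) (at t within S)"
    by (intro has_vector_derivative_add has_vector_derivative_const)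
  then have D: "((\<lambda>s. f t + Ln (k s)) has_vector_derivative (g' / g t)) (at t within S)"
    by (simp add: field_simps o_def)
  show ?thesis
  proof (rule has_vector_derivative_transform_within[OF D d(1) tS])
    fix s assume sS: "s\<in>S" and ds: "dist s t < d"
    define z where "z = f s - f t"
    have ez: "exp z = k s" unfolding z_def k_def using ex[OF sS] ex[OF tS] gnz
      by (simp add: exp_diff field_simps)
    have "norm z < pi" using d(2)[OF sS ds] by (simp add: z_def dist_norm)
    moreover have "\<bar>Im z\<bar> \<le> norm z" by (rule abs_Im_le_cmod)
    ultimately have "Ln (exp z) = z" by (intro Ln_exp) auto
    then show "f t + Ln (k s) = f s" using ez by (simp add: z_def)
  qed
qed


lemma cplx_key:
  fixes t1 t2 t3 tp tm z X X' Z' cc :: complex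
  assumes z: "z \<noteq> t1" "z \<noteq> t2" "z \<noteq> t3" and X: "X \<noteq> 0" and cc: "cc \<noteq> 0"
    and rel: "X' * (- 3 * cc * (z - t1) * (z - t2) * (z - t3)) + Z' * (- 3 * cc * (z - tp) * (z - tm)) * X = 0"
  shows "(t1 - t2) * (t2 - t3) * (t3 - t1) * (X' / X)
     - (t1 - tp) * (t2 - t3) * (t1 - tm) * (Z' / (z - t1))
     - (t2 - tp) * (t2 - tm) * (t3 - t1) * (Z' / (z - t2))
     - (t1 - t2) * (t3 - tp) * (t3 - tm) * (Z' / (z - t3)) = 0"
proof -
  define Pi where "Pi = (z - t1) * (z - t2) * (z - t3)"
  define q where "q = (z - tp) * (z - tm)"
  define D where "D = (t1 - t2) * (t2 - t3) * (t3 - t1)"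
  have Pi0: "Pi \<noteq> 0" using z by (simp add: Pi_def)
  have lag: "(t1 - tp) * (t2 - t3) * (t1 - tm) * (z - t2) * (z - t3)
     + (t2 - tp) * (t2 - tm) * (t3 - t1) * (z - t1) * (z - t3)
     + (t1 - t2) * (t3 - tp) * (t3 - tm) * (z - t1) * (z - t2)
     = - D * q"
    unfolding D_def q_def by (simp add: algebra_simps)
  have S: "(t1 - tp) * (t2 - t3) * (t1 - tm) * (Z' / (z - t1))
     + (t2 - tp) * (t2 - tm) * (t3 - t1) * (Z' / (z - t2))
     + (t1 - t2) * (t3 - tp) * (t3 - tm) * (Z' / (z - t3)) = - Z' * D * q / Pi"
  proof -
    have "(t1 - tp) * (t2 - t3) * (t1 - tm) * (Z' / (z - t1))
     + (t2 - tp) * (t2 - tm) * (t3 - t1) * (Z' / (z - t2))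
     + (t1 - t2) * (t3 - tp) * (t3 - tm) * (Z' / (z - t3)) =
      Z' * ((t1 - tp) * (t2 - t3) * (t1 - tm) * (z - t2) * (z - t3)
     + (t2 - tp) * (t2 - tm) * (t3 - t1) * (z - t1) * (z - t3)
     + (t1 - t2) * (t3 - tp) * (t3 - tm) * (z - t1) * (z - t2)) / Pi"
    proof -
      have e1: "Z' / (z - t1) = Z' * ((z - t2) * (z - t3)) / Pi" using z unfolding Pi_def by (simp add: divide_simps ac_simps)
      have e2: "Z' / (z - t2) = Z' * ((z - t1) * (z - t3)) / Pi" using z unfolding Pi_def by (simp add: divide_simps ac_simps)
      have e3: "Z' / (z - t3) = Z' * ((z - t1) * (z - t2)) / Pi" using z unfolding Pi_def by (simp add: divide_simps ac_simps)
      show ?thesis unfolding e1 e2 e3 using Pi0 by (simp add: field_simps)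
    qed
    then show ?thesis using lag by simp
  qed
  have rel2: "X' * Pi = - Z' * q * X"
  proof -
    have "(-3 * cc) * (X' * Pi + Z' * q * X) = 0" using rel unfolding Pi_def q_def by (simp add: algebra_simps)
    then have "X' * Pi + Z' * q * X = 0" using cc by simp
    then show ?thesis by (simp add: add_eq_0_iff algebra_simps)
  qed
  have XX: "X' / X = - Z' * q / Pi" using rel2 X Pi0 by (simp add: field_simps)
  have "(t1 - t2) * (t2 - t3) * (t3 - t1) * (X' / X)
     - (t1 - tp) * (t2 - t3) * (t1 - tm) * (Z' / (z - t1))
     - (t2 - tp) * (t2 - tm) * (t3 - t1) * (Z' / (z - t2))
     - (t1 - t2) * (t3 - tp) * (t3 - tm) * (Z' / (z - t3)) = D * (X' / X) - (- Z' * D * q / Pi)"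
    using S unfolding D_def by (simp add: algebra_simps)
  also have "\<dots> = 0" using XX by simp
  finally show ?thesis .
qed

lemma frac_aux:
  fixes p r q a b c :: real
  assumes "p \<noteq> 0" "r \<noteq> 0" "q \<noteq> 0"
  shows "c / p + b / r = (c * r * q + b * p * q) / (p * r * q)"
    "a / q + c / (- p) = (a * p * r - c * r * q) / (p * r * q)"
    "b / (- r) + a / (- q) = (- b * p * q - a * p * r) / (p * r * q)"
  using assms by (simp_all add: field_simps)

lemma poly_key:
  fixes u v w a b c up vp wp :: real
  assumes d: "u \<noteq> v" "u \<noteq> w" "v \<noteq> w"
    and up: "up = c / (u - v) + b / (u - w)" and vp: "vp = a / (v - w) + c / (v - u)"
    and wp: "wp = b / (w - u) + a / (w - v)"
  shows "(up - vp) * (-3*c*(u + v - 2 * w)^3 + 3*(a-b)*(u + v - 2 * w)^2*(u-v) + 3*(4*a+4*b+c)*(u + v - 2 * w)*(u-v)^2 + 9*(a-b)*(u-v)^3)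
    + ((up + vp - 2 * wp) * (u - v) - (u + v - 2 * w) * (up - vp)) * (-3*c*(u + v - 2 * w)^2 + 3*(a-b)*(u + v - 2 * w)*(u-v) + 3*(a+b+c)*(u-v)^2) = 0"
proof -
  define E where "E = (u - v) * (u - w) * (v - w)"
  define U where "U = c * (u - w) * (v - w) + b * (u - v) * (v - w)"
  define V where "V = a * (u - v) * (u - w) - c * (u - w) * (v - w)"
  define W where "W = - b * (u - v) * (v - w) - a * (u - v) * (u - w)"
  define N where "N = u + v - 2 * w"
  define x where "x = u - v"
  have d': "u - v \<noteq> 0" "u - w \<noteq> 0" "v - w \<noteq> 0" "v - u \<noteq> 0" "w - u \<noteq> 0" "w - v \<noteq> 0" using d by auto
  have E0: "E \<noteq> 0" using d' by (simp add: E_def)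
  note fa = frac_aux[of "u - v" "u - w" "v - w"]
  have upE: "up = U / E" unfolding up U_def E_def using fa(1) d' by simp
  have vpE: "vp = V / E" unfolding vp V_def E_def using fa(2) d' by simp
  have wpE: "wp = W / E" unfolding wp W_def E_def using fa(3) d' by simp
  have key: "(U - V) * (-3*c*N^3 + 3*(a-b)*N^2*x + 3*(4*a+4*b+c)*N*x^2 + 9*(a-b)*x^3)
    + ((U + V - 2 * W) * x - N * (U - V)) * (-3*c*N^2 + 3*(a-b)*N*x + 3*(a+b+c)*x^2) = 0"
    unfolding U_def V_def W_def N_def x_def by (simp add: algebra_simps power2_eq_square power3_eq_cube)
  have "(up - vp) * (-3*c*N^3 + 3*(a-b)*N^2*x + 3*(4*a+4*b+c)*N*x^2 + 9*(a-b)*x^3)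
    + ((up + vp - 2 * wp) * x - N * (up - vp)) * (-3*c*N^2 + 3*(a-b)*N*x + 3*(a+b+c)*x^2)
    = ((U - V) * (-3*c*N^3 + 3*(a-b)*N^2*x + 3*(4*a+4*b+c)*N*x^2 + 9*(a-b)*x^3)
    + ((U + V - 2 * W) * x - N * (U - V)) * (-3*c*N^2 + 3*(a-b)*N*x + 3*(a+b+c)*x^2)) / E"
    unfolding upE vpE wpE using E0 by (simp add: field_simps)
  then show ?thesis using key unfolding N_def x_def by simp
qed

lemma thp_aux:
  fixes A N B s x :: real
  shows "(A * (s * x) - N * (s * B)) / ((s * x) * (s * x)) = (s * (A * x - N * B)) / (s * (s * x^2))"
  by (simp add: algebra_simps power2_eq_square)

lemma real_key2:
  fixes s N x X' N' a b c :: real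
  assumes s: "s * s = 3" and x: "x \<noteq> 0"
    and key: "X' * (-3*c*N^3 + 3*(a-b)*N^2*x + 3*(4*a+4*b+c)*N*x^2 + 9*(a-b)*x^3)
    + (N' * x - N * X') * (-3*c*N^2 + 3*(a-b)*N*x + 3*(a+b+c)*x^2) = 0"
  shows "X' * (- 3 * c * (N / (s * x)) ^ 3 + s * (a - b) * (N / (s * x)) ^ 2
            + (4 * a + 4 * b + c) * (N / (s * x)) + s * (a - b))
    + ((N' * x - N * X') / (s * x ^ 2)) * (- 3 * c * (N / (s * x)) ^ 2 + s * (a - b) * (N / (s * x)) + (a + b + c)) * x = 0"
proof -
  have s0: "s \<noteq> 0" using s by auto
  have t1: "N / (s * x) = N * s / (3 * x)"
  proof -
    have "N / (s * x) = N * s / ((s * s) * x)" using s0 x by simp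
    then show ?thesis using s by simp
  qed
  have t2: "(N / (s * x))^2 = N^2 / (3 * x^2)" unfolding t1 power2_eq_square using x by (simp add: field_simps s)
  have s3: "s^3 = 3 * s" using s by (simp add: power3_eq_cube)
  have t3: "(N / (s * x))^3 = N^3 * s / (9 * x^3)" unfolding t1 power_divide power_mult_distrib s3
    using x by (simp add: field_simps)
  have t4: "(N' * x - N * X') / (s * x ^ 2) = s * (N' * x - N * X') / (3 * x^2)"
  proof -
    have "(N' * x - N * X') / (s * x ^ 2) = s * (N' * x - N * X') / ((s * s) * x^2)" using s0 x by simp
    then show ?thesis using s by simp
  qed
  have "X' * (- 3 * c * (N / (s * x)) ^ 3 + s * (a - b) * (N / (s * x)) ^ 2
            + (4 * a + 4 * b + c) * (N / (s * x)) + s * (a - b))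
    + ((N' * x - N * X') / (s * x ^ 2)) * (- 3 * c * (N / (s * x)) ^ 2 + s * (a - b) * (N / (s * x)) + (a + b + c)) * x
    = s * (X' * (-3*c*N^3 + 3*(a-b)*N^2*x + 3*(4*a+4*b+c)*N*x^2 + 9*(a-b)*x^3)
    + (N' * x - N * X') * (-3*c*N^2 + 3*(a-b)*N*x + 3*(a+b+c)*x^2)) / (9 * x^3)"
    unfolding t2 t3 t4 unfolding t1 using x s by (simp add: field_simps power2_eq_square power3_eq_cube)
  then show ?thesis using key by simp
qed
theorem mainTheorem9:
  fixes a b c :: real
    and thpl thmn th1 th2 th3 :: complex
    and \<Omega> :: "(real \<times> real \<times> real) set"
    and L0 L1 L2 L3 :: "real \<times> real \<times> real \<Rightarrow> complex"
    and I :: "real set"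
    and u v w :: "real \<Rightarrow> real"
  assumes c_nz: "c \<noteq> 0"
    and quad: "\<And>z::complex. - 3 * of_real c * z ^ 2 + of_real (sqrt 3 * (a - b)) * z
                  + of_real (a + b + c) = - 3 * of_real c * (z - thpl) * (z - thmn)"
    and cubic: "\<And>z::complex. - 3 * of_real c * z ^ 3 + of_real (sqrt 3 * (a - b)) * z ^ 2
                  + of_real (4 * a + 4 * b + c) * z + of_real (sqrt 3 * (a - b))
                  = - 3 * of_real c * (z - th1) * (z - th2) * (z - th3)"
    and roots_distinct: "th1 \<noteq> th2" "th2 \<noteq> th3" "th1 \<noteq> th3"
    and Omega_open: "open \<Omega>" and Omega_conn: "connected \<Omega>"
    and Omega_dist: "\<And>x y z. (x, y, z) \<in> \<Omega> \<Longrightarrow> x \<noteq> y \<and> y \<noteq> z \<and> x \<noteq> z"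
    and Omega_theta: "\<And>x y z. (x, y, z) \<in> \<Omega> \<Longrightarrow>
           of_real (theta x y z) \<noteq> th1 \<and> of_real (theta x y z) \<noteq> th2 \<and>
           of_real (theta x y z) \<noteq> th3"
    and L_cont: "continuous_on \<Omega> L0" "continuous_on \<Omega> L1"
                "continuous_on \<Omega> L2" "continuous_on \<Omega> L3"
    and L0_log: "\<And>x y z. (x, y, z) \<in> \<Omega> \<Longrightarrow> exp (L0 (x, y, z)) = of_real ((x - y) / sqrt 2)"
    and L1_log: "\<And>x y z. (x, y, z) \<in> \<Omega> \<Longrightarrow> exp (L1 (x, y, z)) = of_real (theta x y z) - th1"
    and L2_log: "\<And>x y z. (x, y, z) \<in> \<Omega> \<Longrightarrow> exp (L2 (x, y, z)) = of_real (theta x y z) - th2"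
    and L3_log: "\<And>x y z. (x, y, z) \<in> \<Omega> \<Longrightarrow> exp (L3 (x, y, z)) = of_real (theta x y z) - th3"
    and I_int: "is_interval I"
    and curve_in: "\<And>t. t \<in> I \<Longrightarrow> (u t, v t, w t) \<in> \<Omega>"
    and ode_u: "\<And>t. t \<in> I \<Longrightarrow>
        (u has_real_derivative (c / (u t - v t) + b / (u t - w t))) (at t within I)"
    and ode_v: "\<And>t. t \<in> I \<Longrightarrow>
        (v has_real_derivative (a / (v t - w t) + c / (v t - u t))) (at t within I)"
    and ode_w: "\<And>t. t \<in> I \<Longrightarrow>
        (w has_real_derivative (b / (w t - u t) + a / (w t - v t))) (at t within I)"
  shows "\<And>s t. s \<in> I \<Longrightarrow> t \<in> I \<Longrightarrow>
      hfun th1 th2 th3 thpl thmn (L0 (u s, v s, w s)) (L1 (u s, v s, w s))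
           (L2 (u s, v s, w s)) (L3 (u s, v s, w s))
    = hfun th1 th2 th3 thpl thmn (L0 (u t, v t, w t)) (L1 (u t, v t, w t))
           (L2 (u t, v t, w t)) (L3 (u t, v t, w t))"
  proof -
  define \<gamma> where "\<gamma> = (\<lambda>t. (u t, v t, w t))"
  define H where "H = (\<lambda>t. hfun th1 th2 th3 thpl thmn (L0 (u t, v t, w t)) (L1 (u t, v t, w t))
           (L2 (u t, v t, w t)) (L3 (u t, v t, w t)))"
  have conv: "convex I" using I_int is_interval_convex_1 by blast
  have dH: "(H has_vector_derivative 0) (at t within I)" if tI: "t \<in> I" for t
  proof -
    define upt where "upt = c / (u t - v t) + b / (u t - w t)"
    define vpt where "vpt = a / (v t - w t) + c / (v t - u t)"
    define wpt where "wpt = b / (w t - u t) + a / (w t - v t)"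
    have du: "(u has_real_derivative upt) (at t within I)" using ode_u[OF tI] by (simp add: upt_def)
    have dv: "(v has_real_derivative vpt) (at t within I)" using ode_v[OF tI] by (simp add: vpt_def)
    have dw: "(w has_real_derivative wpt) (at t within I)" using ode_w[OF tI] by (simp add: wpt_def)
    have dist: "u t \<noteq> v t" "v t \<noteq> w t" "u t \<noteq> w t" using Omega_dist[OF curve_in[OF tI]] by auto
    have x0: "u t - v t \<noteq> 0" using dist by simp
    define th where "th = theta (u t) (v t) (w t)"
    define thp where "thp = ((upt + vpt - 2 * wpt) * (u t - v t) - (u t + v t - 2 * w t) * (upt - vpt)) / (sqrt 3 * (u t - v t) ^ 2)"
    have dth: "((\<lambda>s. theta (u s) (v s) (w s)) has_real_derivative thp) (at t within I)"
    proof -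
      have "((\<lambda>s. (u s + v s - 2 * w s) / (sqrt 3 * (u s - v s))) has_real_derivative
         ((upt + vpt - 2 * wpt) * (sqrt 3 * (u t - v t)) - (u t + v t - 2 * w t) * (sqrt 3 * (upt - vpt)))
          / ((sqrt 3 * (u t - v t)) * (sqrt 3 * (u t - v t)))) (at t within I)"
        by (rule DERIV_divide[OF DERIV_diff[OF DERIV_add[OF du dv] DERIV_cmult[OF dw]]
              DERIV_cmult[OF DERIV_diff[OF du dv]]]) (use x0 in simp)
      moreover have "((upt + vpt - 2 * wpt) * (sqrt 3 * (u t - v t)) - (u t + v t - 2 * w t) * (sqrt 3 * (upt - vpt)))
          / ((sqrt 3 * (u t - v t)) * (sqrt 3 * (u t - v t))) = thp"
      proof -
        have "((upt + vpt - 2 * wpt) * (sqrt 3 * (u t - v t)) - (u t + v t - 2 * w t) * (sqrt 3 * (upt - vpt)))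
          / ((sqrt 3 * (u t - v t)) * (sqrt 3 * (u t - v t)))
          = (sqrt 3 * ((upt + vpt - 2 * wpt) * (u t - v t) - (u t + v t - 2 * w t) * (upt - vpt)))
            / (sqrt 3 * (sqrt 3 * (u t - v t) ^ 2))"
          by (rule thp_aux)
        also have "\<dots> = thp" unfolding thp_def by (rule mult_divide_mult_cancel_left) simp
        finally show ?thesis .
      qed
      ultimately show ?thesis unfolding theta_def by simp
    qed
    have c\<gamma>: "continuous (at t within I) \<gamma>" unfolding \<gamma>_def
      by (rule continuous_Pair[OF DERIV_continuous[OF du] continuous_Pair[OF DERIV_continuous[OF dv] DERIV_continuous[OF dw]]])
    have cL: "continuous (at t within I) (\<lambda>s. L (u s, v s, w s))" if "continuous_on \<Omega> L" for L :: "real \<times> real \<times> real \<Rightarrow> complex"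
    proof -
      have sub: "\<gamma> ` I \<subseteq> \<Omega>" using curve_in by (auto simp: \<gamma>_def)
      have "continuous_on (\<gamma> ` I) L" by (rule continuous_on_subset[OF that sub])
      moreover have "\<gamma> t \<in> \<gamma> ` I" using tI by (rule imageI)
      ultimately have "continuous (at (\<gamma> t) within \<gamma> ` I) L" using tI by (simp add: continuous_on_eq_continuous_within)
      from continuous_within_compose[OF c\<gamma> this] show ?thesis by (simp add: o_def \<gamma>_def)
    qed
    define X where "X = (complex_of_real ((u t - v t) / sqrt 2))"
    define X' where "X' = (complex_of_real ((upt - vpt) / sqrt 2))"
    define z where "z = complex_of_real th"
    define Z' where "Z' = complex_of_real thp"
    have d0: "((\<lambda>s. L0 (u s, v s, w s)) has_vector_derivative X' / X) (at t within I)"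
    proof -
      have "((\<lambda>s. complex_of_real ((u s - v s) / sqrt 2)) has_vector_derivative X') (at t within I)"
        unfolding X'_def by (rule has_vector_derivative_of_real[OF DERIV_cdivide[OF DERIV_diff[OF du dv]]])
      then show ?thesis unfolding X_def
        by (intro log_deriv[OF cL[OF L_cont(1)] _ tI]) (use L0_log curve_in x0 in auto)
    qed
    have dk: "((\<lambda>s. L (u s, v s, w s)) has_vector_derivative Z' / (z - thk)) (at t within I)"
      if "continuous_on \<Omega> L" "\<And>x y z. (x, y, z) \<in> \<Omega> \<Longrightarrow> exp (L (x, y, z)) = of_real (theta x y z) - thk"
        "z \<noteq> thk" for L thk
    proof -
      have "((\<lambda>s. complex_of_real (theta (u s) (v s) (w s)) - thk) has_vector_derivative Z' - 0) (at t within I)"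
        unfolding Z'_def by (intro has_vector_derivative_diff has_vector_derivative_of_real dth has_vector_derivative_const)
      then have "((\<lambda>s. L (u s, v s, w s)) has_vector_derivative (Z' - 0) / (complex_of_real (theta (u t) (v t) (w t)) - thk)) (at t within I)"
        by (intro log_deriv[OF cL[OF that(1)] _ tI]) (use that(2,3) curve_in in \<open>auto simp: z_def th_def\<close>)
      then show ?thesis by (simp add: z_def th_def)
    qed
    have zth: "z \<noteq> th1" "z \<noteq> th2" "z \<noteq> th3" using Omega_theta[OF curve_in[OF tI]] by (auto simp: z_def th_def)
    note d1 = dk[OF L_cont(2) L1_log zth(1)]
    note d2 = dk[OF L_cont(3) L2_log zth(2)]
    note d3 = dk[OF L_cont(4) L3_log zth(3)]
    have dH': "(H has_vector_derivative
       ((th1 - th2) * (th2 - th3) * (th3 - th1) * (X' / X)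
     - (th1 - thpl) * (th2 - th3) * (th1 - thmn) * (Z' / (z - th1))
     - (th2 - thpl) * (th2 - thmn) * (th3 - th1) * (Z' / (z - th2))
     - (th1 - th2) * (th3 - thpl) * (th3 - thmn) * (Z' / (z - th3)))) (at t within I)"
      unfolding H_def hfun_def
      by (intro has_vector_derivative_diff has_vector_derivative_mult_right d0 d1 d2 d3)
    have realrel: "(upt - vpt) * (- 3 * c * th ^ 3 + sqrt 3 * (a - b) * th ^ 2
            + (4 * a + 4 * b + c) * th + sqrt 3 * (a - b))
      + thp * (- 3 * c * th ^ 2 + sqrt 3 * (a - b) * th + (a + b + c)) * (u t - v t) = 0"
    proof -
      have key: "(upt - vpt) * (-3*c*(u t + v t - 2 * w t)^3 + 3*(a-b)*(u t + v t - 2 * w t)^2*(u t-v t) + 3*(4*a+4*b+c)*(u t + v t - 2 * w t)*(u t-v t)^2 + 9*(a-b)*(u t-v t)^3)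
    + ((upt + vpt - 2 * wpt) * (u t - v t) - (u t + v t - 2 * w t) * (upt - vpt)) * (-3*c*(u t + v t - 2 * w t)^2 + 3*(a-b)*(u t + v t - 2 * w t)*(u t-v t) + 3*(a+b+c)*(u t-v t)^2) = 0"
        by (rule poly_key[OF dist(1) dist(3) dist(2) upt_def vpt_def wpt_def])
      have "sqrt 3 * sqrt 3 = (3::real)" by simp
      from real_key2[OF this x0 key] show ?thesis
        unfolding th_def theta_def thp_def by (simp add: mult.commute)
    qed
    have rel: "X' * (- 3 * of_real c * (z - th1) * (z - th2) * (z - th3))
       + Z' * (- 3 * of_real c * (z - thpl) * (z - thmn)) * X = 0"
    proof -
      define Pr where "Pr = - 3 * c * th ^ 3 + sqrt 3 * (a - b) * th ^ 2
            + (4 * a + 4 * b + c) * th + sqrt 3 * (a - b)"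
      define qr where "qr = - 3 * c * th ^ 2 + sqrt 3 * (a - b) * th + (a + b + c)"
      have cP: "- 3 * of_real c * (z - th1) * (z - th2) * (z - th3) = complex_of_real Pr"
        unfolding cubic[symmetric] Pr_def z_def by simp
      have cq: "- 3 * of_real c * (z - thpl) * (z - thmn) = complex_of_real qr"
        unfolding quad[symmetric] qr_def z_def by simp
      have "(upt - vpt) / sqrt 2 * Pr + thp * qr * ((u t - v t) / sqrt 2)
          = ((upt - vpt) * Pr + thp * qr * (u t - v t)) / sqrt 2"
        by (simp add: field_simps)
      also have "\<dots> = 0" using realrel unfolding Pr_def qr_def by simp
      finally have "complex_of_real ((upt - vpt) / sqrt 2 * Pr + thp * qr * ((u t - v t) / sqrt 2)) = 0" by simp
      then show ?thesis unfolding cP cq X_def X'_def Z'_def by simp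
    qed
    have X0: "X \<noteq> 0" using x0 by (simp add: X_def)
    have "of_real c \<noteq> (0::complex)" using c_nz by simp
    from cplx_key[OF zth X0 this rel] dH' show ?thesis by simp
  qed
  have "\<exists>k. \<forall>x\<in>I. H x = k"
    by (rule has_derivative_zero_constant[OF conv]) (use dH in \<open>simp add: has_vector_derivative_def\<close>)
  then obtain k where k: "\<And>x. x \<in> I \<Longrightarrow> H x = k" by blast
  fix s t assume "s \<in> I" "t \<in> I"
  then show "?thesis s t" using k unfolding H_def by metis
qed

end
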